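(* Let $N\ge2$, $D>0$, $b_1,\dots,b_N>0$, $0<r_1<\cdots<r_N$, and let $$P_N(\lambda)=D\prod_{j=1}^N(\lambda+r_j)-\sum_{i=1}^N b_i\prod_{j\neq i}(\lambda+r_j),$$ with roots $a_1>a_2>\cdots>a_N$. Set $$b:=\min_i b_i,\quad B:=\max_i b_i,\quad r:=\min_{1\le i\le N-1}(r_{i+1}-r_i),$$ $$\mu:=\min\Big\{\frac{b\,r^{N-1}}{4D(2r_N)^{N-1}+4NB(2r_N)^{N-2}+1},\ \frac r4,\ \frac{r_1}4\Big\}.$$ Then $$|P_N(\lambda)|\ge\frac{b\,r^{N-1}}{2}>0\qquad\text{for all }\lambda\in\bigcup_{j=1}^N[-r_j-\mu,-r_j+\mu],$$ and consequently $|a_i-a_j|\ge2\mu$ for all $1\le i<j\le N$.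
   Context: Standing assumptions: $D>0$, $b_i>0$, $0<r_1<\cdots<r_N$. The roots of $P_N$ are real, simple and interlace as $-r_N<a_N<-r_{N-1}<\cdots<-r_1<a_1$. *)

theory Defs
  imports Complex_Main
begin

definition PN :: "nat \<Rightarrow> real \<Rightarrow> (nat \<Rightarrow> real) \<Rightarrow> (nat \<Rightarrow> real) \<Rightarrow> real \<Rightarrow> real" where
  "PN N D b r lam = D * (\<Prod>j\<in>{1..N}. lam + r j)
      - (\<Sum>i\<in>{1..N}. b i * (\<Prod>j\<in>{1..N} - {i}. lam + r j))"

end

theory Submission imports Defs begin

lemma mono_r:
  fixes r :: "nat \<Rightarrow> real"
  assumes "\<forall>i\<in>{1..<N}. r i < r (i+1)" "1 \<le> i" "i \<le> j" "j \<le> N"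
  shows "r i \<le> r j"
  using assms(3,4)
proof (induction j rule: dec_induct)
  case base then show ?case by simp
next
  case (step n)
  then have "r n < r (n+1)" using assms(1,2) by auto
  then show ?case using step by auto
qed

lemma gap_r:
  fixes r :: "nat \<Rightarrow> real"
  assumes "\<forall>i\<in>{1..<N}. r i < r (i+1)" "\<forall>i\<in>{1..<N}. g \<le> r (i+1) - r i"
    "1 \<le> i" "i < j" "j \<le> N"
  shows "g \<le> r j - r i"
proof -
  have "r (i+1) \<le> r j" using mono_r[OF assms(1), of "i+1" j] assms by auto
  moreover have "g \<le> r (i+1) - r i" using assms by auto
  ultimately show ?thesis by linarith
qed

lemma bern:
  fixes g m :: real
  assumes "0 \<le> m" "m \<le> g"
  shows "g ^ n - real n * m * g ^ (n - 1) \<le> (g - m) ^ n"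
proof (induction n)
  case 0 then show ?case by simp
next
  case (Suc n)
  have g0: "0 \<le> g" using assms by linarith
  have "(g - m) ^ Suc n = (g - m) * (g - m) ^ n" by simp
  also have "\<dots> \<ge> (g - m) * (g ^ n - real n * m * g ^ (n - 1))"
    using Suc assms by (intro mult_left_mono) auto
  finally have A: "(g - m) * (g ^ n - real n * m * g ^ (n - 1)) \<le> (g - m) ^ Suc n" .
  have "g ^ Suc n - real (Suc n) * m * g ^ n \<le> (g - m) * (g ^ n - real n * m * g ^ (n - 1))"
  proof (cases n)
    case 0 then show ?thesis by simp
  next
    case (Suc k)
    have "(g - m) * (g ^ n - real n * m * g ^ (n - 1)) = g^Suc n - real (Suc n) * m * g^n + real n * m * m * g ^ k"
      using Suc by (simp add: algebra_simps)
    moreover have "0 \<le> real n * m * m * g ^ k" using assms g0 by simp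
    ultimately show ?thesis by linarith
  qed
  with A show ?case by simp
qed

lemma prod_abs_le:
  fixes f :: "nat \<Rightarrow> real"
  assumes "\<forall>k\<in>T. \<bar>f k\<bar> \<le> M"
  shows "\<bar>prod f T\<bar> \<le> M ^ card T"
proof -
  have "\<bar>prod f T\<bar> = (\<Prod>k\<in>T. \<bar>f k\<bar>)" by (rule abs_prod)
  also have "\<dots> \<le> (\<Prod>k\<in>T. M)" by (rule prod_mono) (use assms in auto)
  finally show ?thesis by simp
qed

lemma prod_abs_ge:
  fixes f :: "nat \<Rightarrow> real"
  assumes "\<forall>k\<in>T. \<bar>f k\<bar> \<ge> M" "M \<ge> 0"
  shows "\<bar>prod f T\<bar> \<ge> M ^ card T"
proof -
  have "\<bar>prod f T\<bar> = (\<Prod>k\<in>T. \<bar>f k\<bar>)" by (rule abs_prod)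
  also have "\<dots> \<ge> (\<Prod>k\<in>T. M)" by (rule prod_mono) (use assms in auto)
  finally show ?thesis by simp
qed

lemma part1:
  fixes N :: nat and D :: real and b r :: "nat \<Rightarrow> real"
  assumes N2: "N \<ge> 2" and D0: "D > 0"
    and bmin: "\<forall>i\<in>{1..N}. bmin \<le> b i" and bmin0: "bmin > 0"
    and bmax: "\<forall>i\<in>{1..N}. b i \<le> bmax"
    and r1: "r 1 > 0" and rinc: "\<forall>i\<in>{1..<N}. r i < r (i+1)"
    and g0: "g > 0" and gle: "\<forall>i\<in>{1..<N}. g \<le> r (i+1) - r i"
    and mu0: "mu \<ge> 0"
    and mub: "mu * (4 * D * (2 * r N) ^ (N-1) + 4 * real N * bmax * (2 * r N) ^ (N-2) + 1) \<le> bmin * g ^ (N-1)"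
    and mur: "mu \<le> r 1 / 4"
    and j: "j \<in> {1..N}" and lam: "\<bar>lam + r j\<bar> \<le> mu"
  shows "\<bar>PN N D b r lam\<bar> \<ge> bmin * g ^ (N-1) / 2"
proof -
  define S where "S = {1..N}"
  define S' where "S' = S - {j}"
  have fS: "finite S" "finite S'" unfolding S_def S'_def by auto
  have jS: "j \<in> S" using j S_def by auto
  have cS': "card S' = N - 1" unfolding S'_def S_def using j by auto
  have rpos: "\<forall>k\<in>S. 0 < r k \<and> r k \<le> r N" 
  proof
    fix k assume "k \<in> S"
    then have "1 \<le> k" "k \<le> N" unfolding S_def by auto
    then show "0 < r k \<and> r k \<le> r N" using mono_r[OF rinc, of 1 k] mono_r[OF rinc, of k N] r1 by auto
  qed
  have dist: "\<forall>k\<in>S'. g \<le> \<bar>r k - r j\<bar>"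
  proof
    fix k assume k: "k \<in> S'"
    then have k1: "1 \<le> k" "k \<le> N" "k \<noteq> j" unfolding S'_def S_def by auto
    show "g \<le> \<bar>r k - r j\<bar>"
    proof (cases "k < j")
      case True then show ?thesis using gap_r[OF rinc gle, of k j] k1 j by auto
    next
      case False then show ?thesis using gap_r[OF rinc gle, of j k] k1 j by auto
    qed
  qed
  have rN: "r N \<ge> r 2" using mono_r[OF rinc, of 2 N] N2 by auto
  have r2: "g \<le> r 2 - r 1" using gle N2 by (metis Suc_1 Suc_le_lessD atLeastLessThan_iff le_refl one_add_one)
  have grN: "g \<le> 2 * r N" using rN r2 r1 g0 by linarith
  have bb: "bmin \<le> bmax" using bmin bmax N2 by force
  have gpow: "g ^ (N-2) \<le> (2 * r N) ^ (N-2)" using grN g0 by (intro power_mono) auto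
  have t1: "0 \<le> mu * (4 * D * (2 * r N) ^ (N-1))" using mu0 D0 r1 rN r2 g0 by simp
  have "mu * (4 * real N * bmin * g ^ (N-2)) \<le> mu * (4 * real N * bmax * (2 * r N) ^ (N-2))"
    using mu0 bb gpow bmin0 g0 by (intro mult_left_mono mult_mono) auto
  also have "\<dots> \<le> bmin * g ^ (N-1)" using mub t1 mu0 by (simp add: algebra_simps)
  also have "\<dots> = bmin * (g ^ (N-2) * g)" using N2
    by (metis Suc_diff_Suc Suc_1 Suc_le_lessD diff_Suc_1 mult.commute power_Suc)
  finally have "bmin * g ^ (N-2) * (4 * real N * mu) \<le> bmin * g ^ (N-2) * g"
    by (simp add: algebra_simps)
  then have NM: "4 * real N * mu \<le> g" using bmin0 g0 by (simp add: mult_le_cancel_left_pos)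
  have "mu * 1 \<le> mu * (4 * real N)" using mu0 N2 by (intro mult_left_mono) auto
  then have mug: "mu \<le> g" using NM by (simp add: algebra_simps)
  have lowk: "\<forall>k\<in>S'. \<bar>lam + r k\<bar> \<ge> g - mu"
  proof
    fix k assume "k \<in> S'"
    then have "g \<le> \<bar>r k - r j\<bar>" using dist by blast
    then show "\<bar>lam + r k\<bar> \<ge> g - mu" using lam by linarith
  qed
  have A: "\<bar>b j * (\<Prod>k\<in>S'. lam + r k)\<bar> \<ge> bmin * (g - mu) ^ (N-1)"
  proof -
    have "\<bar>\<Prod>k\<in>S'. lam + r k\<bar> \<ge> (g - mu) ^ (N-1)"
      using prod_abs_ge[OF lowk] mug cS' by simp
    moreover have "bmin \<le> b j" using bmin j by blast
    then have "bmin \<le> \<bar>b j\<bar>" by linarith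
    ultimately have "bmin * (g - mu) ^ (N-1) \<le> \<bar>b j\<bar> * \<bar>\<Prod>k\<in>S'. lam + r k\<bar>"
      using bmin0 mug by (intro mult_mono) auto
    then show ?thesis by (simp only: abs_mult)
  qed
  obtain n where Nn: "N = Suc (Suc n)" using N2 by (metis add_2_eq_Suc le_Suc_ex)
  have pw: "g ^ (N-1) = g * g ^ (N-2)" using Nn by simp
  have "(g - mu) ^ (N-1) \<ge> g ^ (N-1) - real (N-1) * mu * g ^ (N-1-1)"
    using bern[OF mu0 mug] .
  moreover have "real (N-1) * mu * g ^ (N-1-1) \<le> g ^ (N-1) / 4"
  proof -
    have e: "N-1-1 = N-2" by simp
    have "real (N-1) * mu * g ^ (N-2) \<le> real N * mu * g ^ (N-2)" using mu0 g0 by (intro mult_right_mono) auto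
    also have "\<dots> \<le> (g/4) * g ^ (N-2)" using NM g0 by (intro mult_right_mono) auto
    also have "\<dots> = g ^ (N-1) / 4" unfolding pw by simp
    finally show ?thesis unfolding e .
  qed
  ultimately have "(g - mu) ^ (N-1) \<ge> g ^ (N-1) * (3/4)" by linarith
  then have "bmin * (g - mu) ^ (N-1) \<ge> bmin * (g ^ (N-1) * (3/4))"
    using bmin0 by (intro mult_left_mono) auto
  then have A2: "\<bar>b j * (\<Prod>k\<in>S'. lam + r k)\<bar> \<ge> bmin * g ^ (N-1) * (3/4)"
    using A by (simp add: mult.assoc)
  have upk: "\<forall>k\<in>S. \<bar>lam + r k\<bar> \<le> 2 * r N"
  proof
    fix k assume "k \<in> S"
    then have "0 < r k \<and> r k \<le> r N" using rpos by auto
    moreover have "0 < r j \<and> r j \<le> r N" using rpos jS by auto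
    moreover have "mu \<le> r N" using mur r1 rN r2 g0 by linarith
    ultimately show "\<bar>lam + r k\<bar> \<le> 2 * r N" using lam by linarith
  qed
  have B1: "\<bar>D * (\<Prod>k\<in>S. lam + r k)\<bar> \<le> D * mu * (2 * r N) ^ (N-1)"
  proof -
    have "(\<Prod>k\<in>S. lam + r k) = (lam + r j) * (\<Prod>k\<in>S'. lam + r k)"
      unfolding S'_def using prod.remove[OF fS(1) jS] .
    moreover have "\<bar>\<Prod>k\<in>S'. lam + r k\<bar> \<le> (2 * r N) ^ (N-1)"
    proof -
      have "\<forall>k\<in>S'. \<bar>lam + r k\<bar> \<le> 2 * r N" using upk unfolding S'_def by blast
      from prod_abs_le[OF this] show ?thesis unfolding cS' .
    qed
    ultimately have "\<bar>\<Prod>k\<in>S. lam + r k\<bar> \<le> mu * (2 * r N) ^ (N-1)"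
      using lam by (simp only: abs_mult) (intro mult_mono, auto)
    then show ?thesis using D0 by (simp add: abs_mult)
  qed
  have C: "\<bar>\<Sum>i\<in>S'. b i * (\<Prod>k\<in>S - {i}. lam + r k)\<bar> \<le> real N * bmax * mu * (2 * r N) ^ (N-2)"
  proof -
    have each: "\<bar>b i * (\<Prod>k\<in>S - {i}. lam + r k)\<bar> \<le> bmax * mu * (2 * r N) ^ (N-2)" if i: "i \<in> S'" for i
    proof -
      have jSi: "j \<in> S - {i}" using i jS S'_def by auto
      have "(\<Prod>k\<in>S - {i}. lam + r k) = (lam + r j) * (\<Prod>k\<in>S - {i} - {j}. lam + r k)"
        using prod.remove[OF _ jSi] fS by auto
      moreover have "card (S - {i} - {j}) = N - 2" using i jS unfolding S'_def S_def by auto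
      moreover have "\<bar>\<Prod>k\<in>S - {i} - {j}. lam + r k\<bar> \<le> (2 * r N) ^ card (S - {i} - {j})"
      proof -
        have "\<forall>k\<in>S - {i} - {j}. \<bar>lam + r k\<bar> \<le> 2 * r N" using upk by blast
        from prod_abs_le[OF this] show ?thesis .
      qed
      ultimately have "\<bar>\<Prod>k\<in>S - {i}. lam + r k\<bar> \<le> mu * (2 * r N) ^ (N-2)"
        using lam by (simp only: abs_mult) (intro mult_mono, auto)
      moreover have "\<bar>b i\<bar> \<le> bmax" using bmax bmin bmin0 i unfolding S'_def S_def by force
      ultimately show ?thesis by (simp add: abs_mult mult_mono mult.assoc)
    qed
    have "\<bar>\<Sum>i\<in>S'. b i * (\<Prod>k\<in>S - {i}. lam + r k)\<bar> \<le> (\<Sum>i\<in>S'. \<bar>b i * (\<Prod>k\<in>S - {i}. lam + r k)\<bar>)"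
      by (rule sum_abs)
    also have "\<dots> \<le> (\<Sum>i\<in>S'. bmax * mu * (2 * r N) ^ (N-2))" by (rule sum_mono) (use each in auto)
    also have "\<dots> = real (N-1) * (bmax * mu * (2 * r N) ^ (N-2))" using cS' by simp
    also have "\<dots> \<le> real N * (bmax * mu * (2 * r N) ^ (N-2))"
      using bmax bb bmin0 mu0 rpos jS by (intro mult_right_mono) auto
    finally show ?thesis by (simp add: mult.assoc)
  qed
  have split: "PN N D b r lam = D * (\<Prod>k\<in>S. lam + r k) - b j * (\<Prod>k\<in>S'. lam + r k)
      - (\<Sum>i\<in>S'. b i * (\<Prod>k\<in>S - {i}. lam + r k))"
    unfolding PN_def S_def[symmetric] S'_def using sum.remove[OF fS(1) jS, of "\<lambda>i. b i * (\<Prod>k\<in>S - {i}. lam + r k)"]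
    by simp
  have "D * mu * (2 * r N) ^ (N-1) + real N * bmax * mu * (2 * r N) ^ (N-2) \<le> bmin * g ^ (N-1) / 4"
    using mub mu0 by (simp add: algebra_simps)
  then show ?thesis using split A2 B1 C by linarith
qed

lemma PN_factor:
  assumes nz: "\<forall>k\<in>{1..N}. lam + r k \<noteq> 0"
  shows "PN N D b r lam = (\<Prod>k\<in>{1..N}. lam + r k) * (D - (\<Sum>i\<in>{1..N}. b i / (lam + r i)))"
proof -
  have "(\<Prod>k\<in>{1..N}. lam + r k) * (\<Sum>i\<in>{1..N}. b i / (lam + r i))
      = (\<Sum>i\<in>{1..N}. b i * (\<Prod>k\<in>{1..N} - {i}. lam + r k))"
    unfolding sum_distrib_left
  proof (rule sum.cong)
    fix i assume i: "i \<in> {1..N}"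
    have "(\<Prod>k\<in>{1..N}. lam + r k) = (lam + r i) * (\<Prod>k\<in>{1..N} - {i}. lam + r k)"
      using prod.remove[of "{1..N}" i] i by auto
    then show "(\<Prod>k\<in>{1..N}. lam + r k) * (b i / (lam + r i)) = b i * (\<Prod>k\<in>{1..N} - {i}. lam + r k)"
      using nz i by (simp add: field_simps)
  qed simp
  then show ?thesis unfolding PN_def by (simp add: algebra_simps)
qed

lemma roots_sep:
  fixes N :: nat and D :: real and b r :: "nat \<Rightarrow> real"
  assumes bpos: "\<forall>i\<in>{1..N}. b i > 0" and N1: "N \<ge> 1"
    and H: "\<forall>k\<in>{1..N}. \<forall>lam. \<bar>lam + r k\<bar> \<le> mu \<longrightarrow> PN N D b r lam \<noteq> 0"
    and mu0: "mu \<ge> 0" and xy: "x < y" and px: "PN N D b r x = 0" and py: "PN N D b r y = 0"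
  shows "y - x \<ge> 2 * mu"
proof (cases "\<exists>k\<in>{1..N}. x < - r k \<and> - r k < y")
  case True
  then obtain k where k: "k \<in> {1..N}" "x < - r k" "- r k < y" by blast
  have "\<not> \<bar>x + r k\<bar> \<le> mu" using H k px by blast
  moreover have "\<not> \<bar>y + r k\<bar> \<le> mu" using H k py by blast
  ultimately show ?thesis using k by linarith
next
  case False
  have nzx: "\<forall>k\<in>{1..N}. x + r k \<noteq> 0" using H px mu0 by force
  have nzy: "\<forall>k\<in>{1..N}. y + r k \<noteq> 0" using H py mu0 by force
  have lt: "b i / (y + r i) < b i / (x + r i)" if i: "i \<in> {1..N}" for i
  proof -
    have bi: "b i > 0" using bpos i by blast
    have "x + r i \<noteq> 0" "y + r i \<noteq> 0" using nzx nzy i by auto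
    moreover have "\<not> (x < - r i \<and> - r i < y)" using False i by blast
    ultimately have "(0 < x + r i \<and> 0 < y + r i) \<or> (x + r i < 0 \<and> y + r i < 0)" using xy by linarith
    then show ?thesis
    proof
      assume a: "0 < x + r i \<and> 0 < y + r i"
      then show ?thesis using bi xy by (intro divide_strict_left_mono) auto
    next
      assume a: "x + r i < 0 \<and> y + r i < 0"
      have d: "(x + r i) * (y + r i) > 0" using a by (simp add: mult_neg_neg)
      have "b i / (y + r i) - b i / (x + r i) = b i * (x - y) / ((x + r i) * (y + r i))"
        using a by (simp add: field_simps)
      moreover have "b i * (x - y) < 0" using bi xy by (simp add: mult_pos_neg)
      ultimately have "b i / (y + r i) - b i / (x + r i) < 0" using d by (simp add: divide_neg_pos)
      then show ?thesis by simp
    qed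
  qed
  have "(\<Sum>i\<in>{1..N}. b i / (y + r i)) < (\<Sum>i\<in>{1..N}. b i / (x + r i))"
    using N1 by (intro sum_strict_mono) (auto intro: lt)
  moreover have "(\<Prod>k\<in>{1..N}. x + r k) \<noteq> 0" using nzx by simp
  moreover have "(\<Prod>k\<in>{1..N}. y + r k) \<noteq> 0" using nzy by simp
  ultimately show ?thesis using PN_factor[OF nzx, of D b] PN_factor[OF nzy, of D b] px py by simp
qed

lemma chain_a:
  fixes a :: "nat \<Rightarrow> real"
  assumes "\<forall>i\<in>{1..<N}. a (i+1) < a i" "1 \<le> i" "Suc i \<le> j" "j \<le> N"
  shows "a j < a i"
  using assms(3,4)
proof (induction j rule: dec_induct)
  case base then show ?case using assms(1,2) by auto
next
  case (step n)
  then have "a (n+1) < a n" using assms(1,2) by auto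
  then show ?case using step by auto
qed

theorem lemma5p2:
  fixes N :: nat and D :: real and b r a :: "nat \<Rightarrow> real"
  assumes "N \<ge> 2" and "D > 0"
    and "\<forall>i\<in>{1..N}. b i > 0"
    and "r 1 > 0" and "\<forall>i\<in>{1..<N}. r i < r (i+1)"
    and "\<forall>i\<in>{1..N}. PN N D b r (a i) = 0"
    and "\<forall>i\<in>{1..<N}. a (i+1) < a i"
  shows "let bmin = Min (b ` {1..N}); bmax = Max (b ` {1..N});
             rgap = Min ((\<lambda>i. r (i+1) - r i) ` {1..N-1});
             \<mu> = min (bmin * rgap ^ (N-1) /
                     (4 * D * (2 * r N) ^ (N-1) + 4 * real N * bmax * (2 * r N) ^ (N-2) + 1))
                   (min (rgap / 4) (r 1 / 4))
         in (\<forall>lam \<in> (\<Union>j\<in>{1..N}. {- r j - \<mu> .. - r j + \<mu>}).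
                \<bar>PN N D b r lam\<bar> \<ge> bmin * rgap ^ (N-1) / 2 \<and> bmin * rgap ^ (N-1) / 2 > 0)
            \<and> (\<forall>i j. 1 \<le> i \<and> i < j \<and> j \<le> N \<longrightarrow> \<bar>a i - a j\<bar> \<ge> 2 * \<mu>)"
proof -
  note N2 = assms(1) and D0 = assms(2) and bpos = assms(3) and r1 = assms(4) and rinc = assms(5)
    and roots = assms(6) and adec = assms(7)
  define bmin where "bmin = Min (b ` {1..N})"
  define bmax where "bmax = Max (b ` {1..N})"
  define g where "g = Min ((\<lambda>i. r (i+1) - r i) ` {1..N-1})"
  define den where "den = 4 * D * (2 * r N) ^ (N-1) + 4 * real N * bmax * (2 * r N) ^ (N-2) + 1"
  define mu where "mu = min (bmin * g ^ (N-1) / den) (min (g / 4) (r 1 / 4))"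
  have ne: "b ` {1..N} \<noteq> {}" using N2 by auto
  have bmin: "\<forall>i\<in>{1..N}. bmin \<le> b i" unfolding bmin_def by auto
  have bmax: "\<forall>i\<in>{1..N}. b i \<le> bmax" unfolding bmax_def by auto
  have bmin0: "bmin > 0"
  proof -
    have "bmin \<in> b ` {1..N}" unfolding bmin_def using ne by (intro Min_in) auto
    then show ?thesis using bpos by auto
  qed
  have e: "{1..N-1} = {1..<N}" using N2 by auto
  have gle: "\<forall>i\<in>{1..<N}. g \<le> r (i+1) - r i" unfolding g_def e by auto
  have g0: "g > 0"
  proof -
    have "g \<in> (\<lambda>i. r (i+1) - r i) ` {1..<N}" unfolding g_def e using N2 by (intro Min_in) auto
    then show ?thesis using rinc by auto
  qed
  have rN: "r N > 0" using mono_r[OF rinc, of 1 N] r1 N2 by auto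
  have bmax0: "bmax > 0" using bmin bmax bmin0 N2 by force
  have den0: "den > 0" unfolding den_def using D0 rN bmax0 by (intro add_nonneg_pos add_nonneg_nonneg) auto
  have num0: "bmin * g ^ (N-1) > 0" using bmin0 g0 by simp
  have mu0: "mu \<ge> 0" unfolding mu_def using num0 den0 g0 r1 by auto
  have "mu \<le> bmin * g ^ (N-1) / den" unfolding mu_def by simp
  then have mub: "mu * den \<le> bmin * g ^ (N-1)" using den0 by (simp add: pos_le_divide_eq)
  have mur: "mu \<le> r 1 / 4" unfolding mu_def using min.cobounded2[of "g/4" "r 1 / 4"] min.cobounded2[of "bmin * g ^ (N-1) / den" "min (g / 4) (r 1 / 4)"] by linarith
  have P1: "\<bar>PN N D b r lam\<bar> \<ge> bmin * g ^ (N-1) / 2" if j: "j \<in> {1..N}" and lam: "\<bar>lam + r j\<bar> \<le> mu" for j lam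
    using part1[OF N2 D0 bmin bmin0 bmax r1 rinc g0 gle mu0 _ mur j lam] mub unfolding den_def by simp
  have H: "\<forall>k\<in>{1..N}. \<forall>lam. \<bar>lam + r k\<bar> \<le> mu \<longrightarrow> PN N D b r lam \<noteq> 0"
    using P1 num0 by fastforce
  have C1: "\<forall>lam \<in> (\<Union>j\<in>{1..N}. {- r j - mu .. - r j + mu}).
                \<bar>PN N D b r lam\<bar> \<ge> bmin * g ^ (N-1) / 2 \<and> bmin * g ^ (N-1) / 2 > 0"
  proof
    fix lam assume "lam \<in> (\<Union>j\<in>{1..N}. {- r j - mu .. - r j + mu})"
    then obtain j where j: "j \<in> {1..N}" and "lam \<in> {- r j - mu .. - r j + mu}" by blast
    then have "\<bar>lam + r j\<bar> \<le> mu" by auto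
    then show "\<bar>PN N D b r lam\<bar> \<ge> bmin * g ^ (N-1) / 2 \<and> bmin * g ^ (N-1) / 2 > 0"
      using P1[OF j] num0 by simp
  qed
  have C2: "\<forall>i j. 1 \<le> i \<and> i < j \<and> j \<le> N \<longrightarrow> \<bar>a i - a j\<bar> \<ge> 2 * mu"
  proof (intro allI impI)
    fix i j assume ij: "1 \<le> i \<and> i < j \<and> j \<le> N"
    then have lt: "a j < a i" using chain_a[OF adec, of i j] by auto
    have "a i - a j \<ge> 2 * mu"
      using roots_sep[OF bpos _ H mu0 lt] roots ij by auto
    then show "\<bar>a i - a j\<bar> \<ge> 2 * mu" by linarith
  qed
  show ?thesis unfolding Let_def bmin_def[symmetric] bmax_def[symmetric] g_def[symmetric]
    den_def[symmetric] mu_def[symmetric] using C1 C2 by blast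
qed

end
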